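(* For every integer $d\ge 0$ there is a simplicial complex $\Delta$ with $\mathrm{ctd}(\Delta)\ge d$.
   Context: Given convex polytopes $P_1,\dots,P_n\subset\mathbb{R}^d$ each containing the origin and a point $\mu\in\mathbb{R}^d$, write $P_\sigma=\sum_{i\in\sigma}P_i$ (Minkowski sum) for $\sigma\subseteq[n]$, with $P_\emptyset=\{0\}$; the Minkowski complex $\Delta(\mathcal{P};\mu)$ is the simplicial complex on vertex set $[n]$ whose faces are the $\sigma\subseteq[n]$ with $\mu\notin P_\sigma$. The convex threshold dimension $\mathrm{ctd}(\Delta)$ of a simplicial complex $\Delta$ on vertex set $[n]$ is the smallest $d$ such that $\Delta=\Delta(\mathcal{P};\mu)$ for some family $\mathcal{P}=(P_1,\dots,P_n)$ of convex bodies (equivalently, convex polytopes) in $\mathbb{R}^d$ containing the origin and some $\mu\in\mathbb{R}^d$; this is finite for every simplicial complex. *)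

theory Defs
  imports Complex_Main "HOL-Library.Function_Algebras"
begin

text \<open>Points of R^d are represented as functions nat => real vanishing outside {0..<d}
  (explicit carrier, since the dimension d is quantified inside the statement).
  Vertex set [n] is represented as {0..<n}.\<close>

definition in_Rd :: "nat \<Rightarrow> (nat \<Rightarrow> real) \<Rightarrow> bool" where
  "in_Rd d x \<longleftrightarrow> (\<forall>i\<ge>d. x i = 0)"

definition conv_hull_pts :: "(nat \<Rightarrow> real) set \<Rightarrow> (nat \<Rightarrow> real) set" where
  "conv_hull_pts V = {x. \<exists>c. (\<forall>v\<in>V. 0 \<le> c v) \<and> (\<Sum>v\<in>V. c v) = 1
                              \<and> x = (\<lambda>k. \<Sum>v\<in>V. c v * v k)}"

definition polytope_in :: "nat \<Rightarrow> (nat \<Rightarrow> real) set \<Rightarrow> bool" where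
  "polytope_in d P \<longleftrightarrow> (\<exists>V. finite V \<and> V \<noteq> {} \<and> (\<forall>v\<in>V. in_Rd d v) \<and> P = conv_hull_pts V)"

text \<open>Minkowski sum P_sigma of the P_i, i in sigma; the empty sum is {0}.\<close>
definition mink_sum :: "(nat \<Rightarrow> (nat \<Rightarrow> real) set) \<Rightarrow> nat set \<Rightarrow> (nat \<Rightarrow> real) set" where
  "mink_sum P \<sigma> = {x. \<exists>y. (\<forall>i\<in>\<sigma>. y i \<in> P i) \<and> x = (\<lambda>k. \<Sum>i\<in>\<sigma>. y i k)}"

definition minkowski_complex :: "nat \<Rightarrow> (nat \<Rightarrow> (nat \<Rightarrow> real) set) \<Rightarrow> (nat \<Rightarrow> real) \<Rightarrow> nat set set" where
  "minkowski_complex n P \<mu> = {\<sigma>. \<sigma> \<subseteq> {0..<n} \<and> \<mu> \<notin> mink_sum P \<sigma>}"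

definition simplicial_complex :: "nat \<Rightarrow> nat set set \<Rightarrow> bool" where
  "simplicial_complex n \<Delta> \<longleftrightarrow> \<Delta> \<subseteq> Pow {0..<n} \<and> (\<forall>\<sigma>\<in>\<Delta>. \<forall>\<tau>. \<tau> \<subseteq> \<sigma> \<longrightarrow> \<tau> \<in> \<Delta>)"

definition realizable_in :: "nat \<Rightarrow> nat set set \<Rightarrow> nat \<Rightarrow> bool" where
  "realizable_in n \<Delta> d \<longleftrightarrow>
     (\<exists>P \<mu>. (\<forall>i<n. polytope_in d (P i) \<and> 0 \<in> P i) \<and> in_Rd d \<mu>
            \<and> \<Delta> = minkowski_complex n P \<mu>)"

definition ctd :: "nat \<Rightarrow> nat set set \<Rightarrow> nat" where
  "ctd n \<Delta> = (LEAST d. realizable_in n \<Delta> d)"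

end

theory Submission imports Defs "HOL-Library.Nat_Bijection" begin

lemma vert_in_hull: "finite V \<Longrightarrow> v \<in> V \<Longrightarrow> v \<in> conv_hull_pts V"
  unfolding conv_hull_pts_def
proof (intro CollectI exI[of _ "\<lambda>w. if w = v then 1 else 0"] conjI)
  assume "finite V" "v \<in> V"
  show "\<forall>w\<in>V. 0 \<le> (if w = v then 1 else (0::real))" by auto
  show "(\<Sum>w\<in>V. if w = v then 1 else (0::real)) = 1" using \<open>finite V\<close> \<open>v \<in> V\<close>
    by (simp add: sum.delta)
  show "v = (\<lambda>k. \<Sum>w\<in>V. (if w = v then 1 else 0) * w k)"
  proof (rule ext)
    fix k
    have "(\<Sum>w\<in>V. (if w = v then 1 else 0) * w k) = (\<Sum>w\<in>V. if w = v then v k else 0)"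
      by (rule sum.cong) auto
    then show "v k = (\<Sum>w\<in>V. (if w = v then 1 else 0) * w k)" using \<open>finite V\<close> \<open>v \<in> V\<close>
      by (simp add: sum.delta')
  qed
qed

lemma hull_coord_zero:
  assumes "x \<in> conv_hull_pts V" "\<forall>v\<in>V. v k = 0"
  shows "x k = 0"
  using assms unfolding conv_hull_pts_def by (auto intro: sum.neutral)

lemma hull_in_Rd:
  assumes "x \<in> conv_hull_pts V" "\<forall>v\<in>V. in_Rd d v"
  shows "in_Rd d x"
  using assms unfolding conv_hull_pts_def in_Rd_def by (auto intro: sum.neutral)

lemma hull_scale:
  assumes "x \<in> conv_hull_pts V" "(0::nat\<Rightarrow>real) \<in> conv_hull_pts V" "0 \<le> a" "a \<le> 1"
  shows "(\<lambda>k. a * x k) \<in> conv_hull_pts V"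
proof -
  obtain c where c: "\<forall>v\<in>V. 0 \<le> c v" "(\<Sum>v\<in>V. c v) = 1" "x = (\<lambda>k. \<Sum>v\<in>V. c v * v k)"
    using assms(1) unfolding conv_hull_pts_def by auto
  obtain c0 where c0: "\<forall>v\<in>V. 0 \<le> c0 v" "(\<Sum>v\<in>V. c0 v) = 1" "(0::nat\<Rightarrow>real) = (\<lambda>k. \<Sum>v\<in>V. c0 v * v k)"
    using assms(2) unfolding conv_hull_pts_def by auto
  have z: "\<And>k. (\<Sum>v\<in>V. c0 v * v k) = 0" using c0(3) by (metis zero_fun_def)
  show ?thesis unfolding conv_hull_pts_def
  proof (intro CollectI exI[of _ "\<lambda>v. a * c v + (1 - a) * c0 v"] conjI)
    show "\<forall>v\<in>V. 0 \<le> a * c v + (1 - a) * c0 v" using c(1) c0(1) assms(3,4) by auto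
    show "(\<Sum>v\<in>V. a * c v + (1 - a) * c0 v) = 1"
      using c(2) c0(2) by (simp add: sum.distrib sum_distrib_left[symmetric])
    show "(\<lambda>k. a * x k) = (\<lambda>k. \<Sum>v\<in>V. (a * c v + (1 - a) * c0 v) * v k)"
    proof
      fix k
      have "(\<Sum>v\<in>V. (a * c v + (1 - a) * c0 v) * v k) = a * (\<Sum>v\<in>V. c v * v k) + (1-a) * (\<Sum>v\<in>V. c0 v * v k)"
      proof -
        have "(\<Sum>v\<in>V. (a * c v + (1 - a) * c0 v) * v k) = (\<Sum>v\<in>V. a * (c v * v k) + (1 - a) * (c0 v * v k))"
          by (rule sum.cong) (auto simp: algebra_simps)
        also have "\<dots> = a * (\<Sum>v\<in>V. c v * v k) + (1-a) * (\<Sum>v\<in>V. c0 v * v k)"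
          by (simp add: sum.distrib sum_distrib_left)
        finally show ?thesis .
      qed
      then show "a * x k = (\<Sum>v\<in>V. (a * c v + (1 - a) * c0 v) * v k)" using z c(3) by simp
    qed
  qed
qed

definition chi :: "nat set \<Rightarrow> nat \<Rightarrow> real" where "chi S = (\<lambda>k. if k \<in> S then 1 else 0)"

lemma realize:
  assumes sc: "simplicial_complex n \<Delta>" and e: "{} \<in> \<Delta>"
  shows "\<exists>D. realizable_in n \<Delta> D"
proof -
  have fin: "finite \<Delta>" using sc unfolding simplicial_complex_def
    by (meson finite_Pow_iff finite_atLeastLessThan finite_subset)
  define D where "D = Suc (Max (set_encode ` \<Delta>))"
  have encD: "set_encode \<sigma> < D" if "\<sigma> \<in> \<Delta>" for \<sigma>
    using fin that unfolding D_def by (simp add: le_imp_less_Suc)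
  have finS: "finite \<sigma>" if "\<sigma> \<in> \<Delta>" for \<sigma>
    using sc that unfolding simplicial_complex_def by (meson PowD finite_atLeastLessThan finite_subset subsetD)
  define C where "C = {k. k < D \<and> set_decode k \<in> \<Delta>}"
  define Ci where "Ci i = {k\<in>C. i \<notin> set_decode k}" for i
  define V where "V i = chi ` Pow (Ci i)" for i
  define P where "P i = conv_hull_pts (V i)" for i
  define \<mu> where "\<mu> = chi C"
  have finC: "finite C" unfolding C_def by auto
  have finV: "finite (V i)" for i unfolding V_def Ci_def using finC by auto
  have polyP: "polytope_in D (P i)" for i
    unfolding polytope_in_def P_def
  proof (intro exI[of _ "V i"] conjI)
    show "finite (V i)" by (rule finV)
    show "V i \<noteq> {}" unfolding V_def by auto
    show "\<forall>v\<in>V i. in_Rd D v" unfolding V_def in_Rd_def chi_def Ci_def C_def by auto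
  qed simp
  have zP: "0 \<in> P i" for i
  proof -
    have "chi {} \<in> V i" unfolding V_def by auto
    moreover have "chi {} = 0" unfolding chi_def by (simp add: zero_fun_def)
    ultimately show ?thesis unfolding P_def using vert_in_hull finV by metis
  qed
  have "\<Delta> = minkowski_complex n P \<mu>"
  proof (rule set_eqI)
    fix \<sigma>
    show "\<sigma> \<in> \<Delta> \<longleftrightarrow> \<sigma> \<in> minkowski_complex n P \<mu>"
    proof
      assume s: "\<sigma> \<in> \<Delta>"
      have sub: "\<sigma> \<subseteq> {0..<n}" using sc s unfolding simplicial_complex_def by auto
      define k0 where "k0 = set_encode \<sigma>"
      have dec: "set_decode k0 = \<sigma>" unfolding k0_def using finS[OF s] by simp
      have k0C: "k0 \<in> C" unfolding C_def using dec s encD[OF s] k0_def by auto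
      have "\<mu> \<notin> mink_sum P \<sigma>"
      proof
        assume "\<mu> \<in> mink_sum P \<sigma>"
        then obtain y where y: "\<forall>i\<in>\<sigma>. y i \<in> P i" "\<mu> = (\<lambda>k. \<Sum>i\<in>\<sigma>. y i k)"
          unfolding mink_sum_def by auto
        have "y i k0 = 0" if "i \<in> \<sigma>" for i
        proof (rule hull_coord_zero)
          show "y i \<in> conv_hull_pts (V i)" using y(1) that P_def by auto
          show "\<forall>v\<in>V i. v k0 = 0" unfolding V_def chi_def Ci_def using dec that by auto
        qed
        then have "\<mu> k0 = 0" using y(2) by simp
        moreover have "\<mu> k0 = 1" using k0C unfolding \<mu>_def chi_def by simp
        ultimately show False by simp
      qed
      then show "\<sigma> \<in> minkowski_complex n P \<mu>" unfolding minkowski_complex_def using sub by auto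
    next
      assume m: "\<sigma> \<in> minkowski_complex n P \<mu>"
      then have sub: "\<sigma> \<subseteq> {0..<n}" and nm: "\<mu> \<notin> mink_sum P \<sigma>"
        unfolding minkowski_complex_def by auto
      show "\<sigma> \<in> \<Delta>"
      proof (rule ccontr)
        assume ns: "\<sigma> \<notin> \<Delta>"
        have ex: "\<exists>i\<in>\<sigma>. i \<notin> set_decode k" if "k \<in> C" for k
        proof (rule ccontr)
          assume "\<not> ?thesis"
          then have "\<sigma> \<subseteq> set_decode k" by auto
          moreover have "set_decode k \<in> \<Delta>" using that C_def by auto
          ultimately have "\<sigma> \<in> \<Delta>" using sc unfolding simplicial_complex_def by blast
          then show False using ns by simp
        qed
        define f where "f k = (SOME i. i \<in> \<sigma> \<and> i \<notin> set_decode k)" for k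
        have f: "f k \<in> \<sigma> \<and> f k \<notin> set_decode k" if "k \<in> C" for k
          unfolding f_def using someI_ex[OF ex[OF that, unfolded Bex_def]] .
        define y where "y i = chi {k\<in>C. f k = i}" for i
        have "\<mu> \<in> mink_sum P \<sigma>" unfolding mink_sum_def
        proof (intro CollectI exI[of _ y] conjI ballI)
          fix i assume "i \<in> \<sigma>"
          have "y i \<in> V i" unfolding y_def V_def Ci_def using f by auto
          then show "y i \<in> P i" unfolding P_def using vert_in_hull finV by metis
        next
          show "\<mu> = (\<lambda>k. \<Sum>i\<in>\<sigma>. y i k)"
          proof
            fix k
            have fs: "finite \<sigma>" using sub finite_subset by blast
            show "\<mu> k = (\<Sum>i\<in>\<sigma>. y i k)"
            proof (cases "k \<in> C")
              case True
              then have "(\<Sum>i\<in>\<sigma>. y i k) = (\<Sum>i\<in>\<sigma>. if i = f k then 1 else 0)"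
                unfolding y_def chi_def by (intro sum.cong) auto
              also have "\<dots> = 1" using f[OF True] fs by (simp add: sum.delta')
              finally show ?thesis using True unfolding \<mu>_def chi_def by simp
            next
              case False
              then show ?thesis unfolding y_def \<mu>_def chi_def by simp
            qed
          qed
        qed
        then show False using nm by simp
      qed
    qed
  qed
  moreover have "in_Rd D \<mu>" unfolding in_Rd_def \<mu>_def chi_def C_def by auto
  ultimately have "realizable_in n \<Delta> D" unfolding realizable_in_def
    by (intro exI[of _ P] exI[of _ \<mu>]) (simp add: polyP zP)
  then show ?thesis by blast
qed


lemma dependent_bound:
  "finite J \<Longrightarrow> e < card J \<Longrightarrow> (\<forall>j\<in>J. in_Rd e (w j)) \<Longrightarrow>
   \<exists>\<alpha>. (\<exists>j\<in>J. \<alpha> j \<noteq> 0) \<and> (\<forall>k. (\<Sum>j\<in>J. \<alpha> j * w j k) = (0::real))"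
proof (induction e arbitrary: J w)
  case 0
  then obtain j0 where "j0 \<in> J" by fastforce
  have "w j k = 0" if "j \<in> J" for j k using 0(3) that unfolding in_Rd_def by auto
  then show ?case using \<open>j0 \<in> J\<close> by (intro exI[of _ "\<lambda>j. 1"]) auto
next
  case (Suc e)
  show ?case
  proof (cases "\<forall>j\<in>J. w j e = 0")
    case True
    then have "\<forall>j\<in>J. in_Rd e (w j)" using Suc.prems(3) unfolding in_Rd_def
      by (metis le_eq_less_or_eq Suc_le_eq)
    then show ?thesis using Suc.IH[of J w] Suc.prems by auto
  next
    case False
    then obtain j0 where j0: "j0 \<in> J" "w j0 e \<noteq> 0" by auto
    define J' where "J' = J - {j0}"
    define w' where "w' j = (\<lambda>k. w j k - (w j e / w j0 e) * w j0 k)" for j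
    have cJ': "e < card J'" using Suc.prems(1,2) j0(1) unfolding J'_def by simp
    have rd: "\<forall>j\<in>J'. in_Rd e (w' j)"
    proof (intro ballI)
      fix j assume "j \<in> J'"
      then have a: "in_Rd (Suc e) (w j)" using Suc.prems(3) J'_def by auto
      have b: "in_Rd (Suc e) (w j0)" using Suc.prems(3) j0 by auto
      show "in_Rd e (w' j)" unfolding in_Rd_def w'_def
      proof (intro allI impI)
        fix i assume "e \<le> i"
        show "w j i - w j e / w j0 e * w j0 i = 0"
        proof (cases "i = e")
          case True then show ?thesis using j0(2) by simp
        next
          case False then have "Suc e \<le> i" using \<open>e \<le> i\<close> by simp
          then show ?thesis using a b unfolding in_Rd_def by simp
        qed
      qed
    qed
    obtain \<beta> where \<beta>: "\<exists>j\<in>J'. \<beta> j \<noteq> 0" "\<forall>k. (\<Sum>j\<in>J'. \<beta> j * w' j k) = 0"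
      using Suc.IH[OF _ cJ' rd] Suc.prems(1) J'_def by auto
    define \<alpha> where "\<alpha> j = (if j = j0 then - (\<Sum>j\<in>J'. \<beta> j * w j e) / w j0 e else \<beta> j)" for j
    show ?thesis
    proof (intro exI[of _ \<alpha>] conjI allI)
      show "\<exists>j\<in>J. \<alpha> j \<noteq> 0" using \<beta>(1) unfolding \<alpha>_def J'_def by auto
      fix k
      have fJ': "finite J'" using Suc.prems(1) J'_def by simp
      have "(\<Sum>j\<in>J. \<alpha> j * w j k) = \<alpha> j0 * w j0 k + (\<Sum>j\<in>J'. \<alpha> j * w j k)"
        using Suc.prems(1) j0(1) unfolding J'_def by (simp add: sum.remove)
      also have "(\<Sum>j\<in>J'. \<alpha> j * w j k) = (\<Sum>j\<in>J'. \<beta> j * w j k)"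
        unfolding \<alpha>_def J'_def by (rule sum.cong) auto
      also have "(\<Sum>j\<in>J'. \<beta> j * w j k) = (\<Sum>j\<in>J'. \<beta> j * w' j k) + (\<Sum>j\<in>J'. \<beta> j * w j e) / w j0 e * w j0 k"
      proof -
        have "(\<Sum>j\<in>J'. \<beta> j * w j k) = (\<Sum>j\<in>J'. \<beta> j * w' j k + (\<beta> j * w j e) / w j0 e * w j0 k)"
          unfolding w'_def by (rule sum.cong) (auto simp: algebra_simps)
        also have "\<dots> = (\<Sum>j\<in>J'. \<beta> j * w' j k) + (\<Sum>j\<in>J'. \<beta> j * w j e) / w j0 e * w j0 k"
          by (simp add: sum.distrib sum_divide_distrib sum_distrib_right)
        finally show ?thesis .
      qed
      finally show "(\<Sum>j\<in>J. \<alpha> j * w j k) = 0" using \<beta>(2) unfolding \<alpha>_def by simp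
    qed
  qed
qed

lemma sum_pairs: "(\<Sum>i<2*M. f i) = (\<Sum>j<M. f j + f (j + M)) " for f :: "nat \<Rightarrow> real"
proof -
  have "{..<2*M} = {..<M} \<union> (\<lambda>j. j + M) ` {..<M}"
  proof (intro set_eqI iffI)
    fix x assume "x \<in> {..<2*M}"
    then show "x \<in> {..<M} \<union> (\<lambda>j. j + M) ` {..<M}"
    proof (cases "x < M")
      case False
      then have "x = (x - M) + M" "x - M < M" using \<open>x \<in> {..<2*M}\<close> by auto
      then show ?thesis by blast
    qed simp
  qed auto
  then have "(\<Sum>i<2*M. f i) = sum f ({..<M} \<union> (\<lambda>j. j + M) ` {..<M})" by simp
  also have "\<dots> = (\<Sum>i<M. f i) + (\<Sum>i\<in>(\<lambda>j. j + M) ` {..<M}. f i)"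
    by (rule sum.union_disjoint) auto
  also have "(\<Sum>i\<in>(\<lambda>j. j + M) ` {..<M}. f i) = (\<Sum>j<M. f (j + M))"
    by (simp add: sum.reindex)
  finally show ?thesis by (simp add: sum.distrib)
qed


definition loose :: "nat \<Rightarrow> (nat \<Rightarrow> real) \<Rightarrow> nat set" where
  "loose M t = {j. j < M \<and> 0 < t j \<and> 0 < t (j + M)}"

lemma reduce:
  fixes y :: "nat \<Rightarrow> nat \<Rightarrow> real"
  assumes yR: "\<forall>i<2*M. in_Rd e (y i)"
  shows "(\<forall>i<2*M. 0 \<le> t i) \<Longrightarrow> (\<forall>j<M. t j + t (j+M) \<le> 1) \<Longrightarrow>
    \<exists>t'. (\<forall>i<2*M. 0 \<le> t' i) \<and> (\<forall>j<M. t' j + t' (j+M) \<le> 1)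
       \<and> (\<forall>k. (\<Sum>i<2*M. t' i * y i k) = (\<Sum>i<2*M. t i * y i k)) \<and> card (loose M t') \<le> e"
proof (induction "card (loose M t)" arbitrary: t rule: less_induct)
  case less
  show ?case
  proof (cases "card (loose M t) \<le> e")
    case True
    then show ?thesis using less.prems by blast
  next
    case False
    define Lo where "Lo = loose M t"
    have LoM: "Lo \<subseteq> {..<M}" unfolding Lo_def loose_def by auto
    have finLo: "finite Lo" using LoM finite_subset by blast
    define w where "w j = (\<lambda>k. y j k - y (j+M) k)" for j
    have wR: "\<forall>j\<in>Lo. in_Rd e (w j)"
    proof
      fix j assume "j \<in> Lo"
      then have "j < 2*M" "j + M < 2*M" using LoM by auto
      then show "in_Rd e (w j)" using yR unfolding in_Rd_def w_def by simp
    qed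
    obtain \<alpha> where \<alpha>: "\<exists>j\<in>Lo. \<alpha> j \<noteq> 0" "\<forall>k. (\<Sum>j\<in>Lo. \<alpha> j * w j k) = 0"
      using dependent_bound[OF finLo _ wR] False Lo_def by auto
    obtain j1 where j1: "j1 \<in> Lo" "\<alpha> j1 \<noteq> 0" using \<alpha>(1) by auto
    define \<alpha>' where "\<alpha>' = (if \<alpha> j1 > 0 then \<alpha> else (\<lambda>j. - \<alpha> j))"
    have a1: "\<alpha>' j1 > 0" using j1(2) unfolding \<alpha>'_def by auto
    have a0: "(\<Sum>j\<in>Lo. \<alpha>' j * w j k) = 0" for k
    proof (cases "\<alpha> j1 > 0")
      case True then show ?thesis using \<alpha>(2) unfolding \<alpha>'_def by simp
    next
      case False
      have "(\<Sum>j\<in>Lo. - \<alpha> j * w j k) = - (\<Sum>j\<in>Lo. \<alpha> j * w j k)" by (simp add: sum_negf)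
      then show ?thesis using \<alpha>(2) False unfolding \<alpha>'_def by simp
    qed
    define \<delta> where "\<delta> i = (if i < M then (if i \<in> Lo then \<alpha>' i else 0)
        else if i < 2*M \<and> i - M \<in> Lo then - \<alpha>' (i - M) else 0)" for i
    have dlo: "\<delta> j = (if j \<in> Lo then \<alpha>' j else 0)" if "j < M" for j
      using that unfolding \<delta>_def by simp
    have dhi: "\<delta> (j + M) = - (if j \<in> Lo then \<alpha>' j else 0)" if "j < M" for j
      using that unfolding \<delta>_def by simp
    define K where "K = {i. i < 2*M \<and> \<delta> i < 0}"
    have finK: "finite K" unfolding K_def by simp
    have j1K: "j1 + M \<in> K" using dhi[of j1] j1(1) LoM a1 unfolding K_def by auto
    have tpos: "0 < t i" if "i \<in> K" for i
    proof (cases "i < M")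
      case True
      then have "i \<in> Lo" using that dlo[of i] unfolding K_def by (auto split: if_splits)
      then show ?thesis unfolding Lo_def loose_def by auto
    next
      case False
      then have "i - M \<in> Lo" using that unfolding K_def \<delta>_def by (auto split: if_splits)
      then have "0 < t (i - M + M)" unfolding Lo_def loose_def by auto
      then show ?thesis using False by simp
    qed
    define s where "s = Min ((\<lambda>i. t i / - \<delta> i) ` K)"
    have sle: "s \<le> t i / - \<delta> i" if "i \<in> K" for i
      unfolding s_def using finK that by simp
    have "s \<in> (\<lambda>i. t i / - \<delta> i) ` K" unfolding s_def
      by (rule Min_in) (use finK j1K in auto)
    then obtain i0 where i0: "i0 \<in> K" "s = t i0 / - \<delta> i0" by blast
    have dneg: "\<delta> i < 0" if "i \<in> K" for i using that K_def by auto
    have spos: "0 < s" using i0 tpos[OF i0(1)] dneg[OF i0(1)] by (simp add: divide_pos_neg)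
    define t' where "t' i = t i + s * \<delta> i" for i
    have nn: "\<forall>i<2*M. 0 \<le> t' i"
    proof (intro allI impI)
      fix i assume i: "i < 2*M"
      show "0 \<le> t' i"
      proof (cases "\<delta> i < 0")
        case True
        then have iK: "i \<in> K" using i K_def by auto
        have "s * (- \<delta> i) \<le> t i / - \<delta> i * (- \<delta> i)"
          using sle[OF iK] True by (intro mult_right_mono) auto
        then have "s * (- \<delta> i) \<le> t i" using True by simp
        then show ?thesis unfolding t'_def by simp
      next
        case False
        then show ?thesis using less.prems(1) i spos unfolding t'_def by simp
      qed
    qed
    have ps: "\<forall>j<M. t' j + t' (j+M) \<le> 1"
    proof (intro allI impI)
      fix j assume "j < M"
      then have "\<delta> j + \<delta> (j+M) = 0" using dlo dhi by simp
      then have "s * \<delta> j + s * \<delta> (j+M) = 0" by (metis distrib_left mult_zero_right)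
      then have "t' j + t' (j+M) = t j + t (j+M)" unfolding t'_def by simp
      then show "t' j + t' (j+M) \<le> 1" using less.prems(2) \<open>j < M\<close> by simp
    qed
    have sm: "\<forall>k. (\<Sum>i<2*M. t' i * y i k) = (\<Sum>i<2*M. t i * y i k)"
    proof
      fix k
      have "(\<Sum>i<2*M. \<delta> i * y i k) = (\<Sum>j<M. \<delta> j * y j k + \<delta> (j + M) * y (j + M) k)"
        by (rule sum_pairs)
      also have "\<dots> = (\<Sum>j<M. if j \<in> Lo then \<alpha>' j * w j k else 0)"
        by (rule sum.cong) (auto simp: dlo dhi w_def algebra_simps)
      also have "\<dots> = (\<Sum>j\<in>Lo. \<alpha>' j * w j k)"
        using LoM by (simp add: sum.If_cases Int_absorb1)
      finally have z: "(\<Sum>i<2*M. \<delta> i * y i k) = 0" using a0 by simp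
      have "(\<Sum>i<2*M. t' i * y i k) = (\<Sum>i<2*M. t i * y i k) + s * (\<Sum>i<2*M. \<delta> i * y i k)"
        unfolding t'_def by (simp add: algebra_simps sum.distrib sum_distrib_left)
      then show "(\<Sum>i<2*M. t' i * y i k) = (\<Sum>i<2*M. t i * y i k)" using z by simp
    qed
    have t'0: "t' i0 = 0" using i0 dneg[OF i0(1)] unfolding t'_def by simp
    define j0 where "j0 = (if i0 < M then i0 else i0 - M)"
    have i0lt: "i0 < 2*M" using i0(1) K_def by auto
    have j0Lo: "j0 \<in> Lo"
      using dneg[OF i0(1)] i0lt unfolding j0_def \<delta>_def by (auto split: if_splits)
    have sub: "loose M t' \<subseteq> Lo - {j0}"
    proof
      fix j assume jl: "j \<in> loose M t'"
      then have jM: "j < M" and p1: "0 < t' j" and p2: "0 < t' (j+M)" unfolding loose_def by auto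
      have "j \<in> Lo"
      proof (rule ccontr)
        assume "j \<notin> Lo"
        then have "t' j = t j" "t' (j+M) = t (j+M)" using dlo[OF jM] dhi[OF jM] unfolding t'_def by auto
        then have "j \<in> loose M t" using jM p1 p2 unfolding loose_def by auto
        then show False using \<open>j \<notin> Lo\<close> Lo_def by simp
      qed
      moreover have "j \<noteq> j0"
      proof
        assume "j = j0"
        show False
        proof (cases "i0 < M")
          case True then show False using \<open>j = j0\<close> p1 t'0 j0_def by simp
        next
          case False then have "i0 = j + M" using \<open>j = j0\<close> j0_def by simp
          then show False using p2 t'0 by simp
        qed
      qed
      ultimately show "j \<in> Lo - {j0}" by simp
    qed
    have "card (loose M t') < card (loose M t)"
    proof -
      have "card (loose M t') \<le> card (Lo - {j0})" using sub finLo by (simp add: card_mono)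
      also have "\<dots> < card Lo" using finLo j0Lo by (metis card_Diff1_less)
      finally show ?thesis unfolding Lo_def .
    qed
    then obtain t'' where t'': "(\<forall>i<2*M. 0 \<le> t'' i)" "(\<forall>j<M. t'' j + t'' (j+M) \<le> 1)"
       "(\<forall>k. (\<Sum>i<2*M. t'' i * y i k) = (\<Sum>i<2*M. t' i * y i k))" "card (loose M t'') \<le> e"
      using less.hyps[of t'] nn ps by blast
    show ?thesis using t'' sm by (intro exI[of _ t'']) auto
  qed
qed


definition fp :: "nat \<Rightarrow> nat set \<Rightarrow> nat set" where
  "fp M \<sigma> = {j. j < M \<and> j \<in> \<sigma> \<and> j + M \<in> \<sigma>}"

lemma lower:
  fixes d e :: nat
  defines "M \<equiv> 2*d+2"
  defines "\<Delta> \<equiv> {\<sigma>. \<sigma> \<subseteq> {0..<2*M} \<and> card (fp M \<sigma>) \<le> d}"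
  assumes r: "realizable_in (2*M) \<Delta> e" and ed: "e \<le> d"
  shows False
proof -
  obtain P \<mu> where P: "\<forall>i<2*M. polytope_in e (P i) \<and> 0 \<in> P i"
    and eq: "\<Delta> = minkowski_complex (2*M) P \<mu>"
    using r unfolding realizable_in_def by blast
  have nonface: "\<mu> \<in> mink_sum P \<sigma>" if "\<sigma> \<subseteq> {0..<2*M}" "d < card (fp M \<sigma>)" for \<sigma>
  proof -
    have "\<sigma> \<notin> \<Delta>" using that unfolding \<Delta>_def by auto
    then show ?thesis using eq that(1) unfolding minkowski_complex_def by auto
  qed
  define N1 where "N1 = {i. i < 2*M \<and> i mod M \<le> d}"
  define N2 where "N2 = {i. i < 2*M \<and> d < i mod M}"
  have m: "(j+M) mod M = j" "j mod M = j" if "j < M" for j using that by auto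
  have dM: "d < M" unfolding M_def by simp
  have f1: "fp M N1 = {..d}"
    unfolding fp_def N1_def using m dM by auto
  have f2: "fp M N2 = {d<..<M}"
    unfolding fp_def N2_def using m dM by auto
  have "\<mu> \<in> mink_sum P N1" by (rule nonface) (unfold f1, auto simp: N1_def)
  then obtain y1 where y1: "\<forall>i\<in>N1. y1 i \<in> P i" "\<mu> = (\<lambda>k. \<Sum>i\<in>N1. y1 i k)"
    unfolding mink_sum_def by auto
  have "\<mu> \<in> mink_sum P N2" by (rule nonface) (unfold f2, auto simp: N2_def M_def)
  then obtain y2 where y2: "\<forall>i\<in>N2. y2 i \<in> P i" "\<mu> = (\<lambda>k. \<Sum>i\<in>N2. y2 i k)"
    unfolding mink_sum_def by auto
  define y where "y i = (if i \<in> N1 then y1 i else y2 i)" for i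
  have yP: "y i \<in> P i" if "i < 2*M" for i
    using y1 y2 that unfolding y_def N1_def N2_def by auto
  have yR: "\<forall>i<2*M. in_Rd e (y i)"
  proof (intro allI impI)
    fix i assume i: "i < 2*M"
    obtain V where "P i = conv_hull_pts V" "\<forall>v\<in>V. in_Rd e v"
      using P i unfolding polytope_in_def by blast
    then show "in_Rd e (y i)" using yP[OF i] hull_in_Rd by metis
  qed
  define t :: "nat \<Rightarrow> real" where "t i = 1/2" for i
  have U: "{..<2*M} = N1 \<union> N2" unfolding N1_def N2_def by auto
  have tsum: "(\<Sum>i<2*M. t i * y i k) = \<mu> k" for k
  proof -
    have "(\<Sum>i<2*M. t i * y i k) = (1/2) * (\<Sum>i<2*M. y i k)"
      unfolding t_def by (simp add: sum_distrib_left)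
    also have "(\<Sum>i<2*M. y i k) = (\<Sum>i\<in>N1. y i k) + (\<Sum>i\<in>N2. y i k)"
      unfolding U by (rule sum.union_disjoint) (auto simp: N1_def N2_def)
    also have "(\<Sum>i\<in>N1. y i k) = \<mu> k" using y1(2) unfolding y_def by simp
    also have "(\<Sum>i\<in>N2. y i k) = (\<Sum>i\<in>N2. y2 i k)"
      unfolding y_def by (rule sum.cong) (auto simp: N1_def N2_def)
    also have "\<dots> = \<mu> k" using y2(2) by simp
    finally show ?thesis by simp
  qed
  obtain t' where t': "\<forall>i<2*M. 0 \<le> t' i" "\<forall>j<M. t' j + t' (j+M) \<le> 1"
      "\<forall>k. (\<Sum>i<2*M. t' i * y i k) = (\<Sum>i<2*M. t i * y i k)" "card (loose M t') \<le> e"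
    using reduce[OF yR, of t] unfolding t_def by auto
  define \<sigma> where "\<sigma> = {i. i < 2*M \<and> 0 < t' i}"
  have "fp M \<sigma> = loose M t'" unfolding fp_def loose_def \<sigma>_def by auto
  then have "\<sigma> \<in> \<Delta>" using t'(4) ed unfolding \<Delta>_def \<sigma>_def by auto
  then have nm: "\<mu> \<notin> mink_sum P \<sigma>" using eq unfolding minkowski_complex_def by auto
  have "\<mu> \<in> mink_sum P \<sigma>" unfolding mink_sum_def
  proof (intro CollectI exI[of _ "\<lambda>i k. t' i * y i k"] conjI ballI)
    fix i assume "i \<in> \<sigma>"
    then have i: "i < 2*M" "0 < t' i" unfolding \<sigma>_def by auto
    have le1: "t' i \<le> 1"
    proof (cases "i < M")
      case True
      then have "t' i + t' (i+M) \<le> 1" "0 \<le> t' (i+M)" using t'(1,2) by auto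
      then show ?thesis by linarith
    next
      case False
      then have "i - M < M" "i - M + M = i" using i by auto
      then have "t' (i-M) + t' i \<le> 1" "0 \<le> t' (i-M)" using t'(1,2) i
        by (metis, metis less_imp_le_nat trans_less_add1 mult_2)
      then show ?thesis by linarith
    qed
    obtain V where V: "P i = conv_hull_pts V" using P i unfolding polytope_in_def by blast
    show "(\<lambda>k. t' i * y i k) \<in> P i" unfolding V
      by (rule hull_scale) (use yP[OF i(1)] P i le1 V in auto)
  next
    show "\<mu> = (\<lambda>k. \<Sum>i\<in>\<sigma>. t' i * y i k)"
    proof
      fix k
      have "(\<Sum>i\<in>\<sigma>. t' i * y i k) = (\<Sum>i<2*M. t' i * y i k)"
      proof (rule sum.mono_neutral_left)
        show "\<forall>i\<in>{..<2*M} - \<sigma>. t' i * y i k = 0"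
          using t'(1) unfolding \<sigma>_def by force
      qed (auto simp: \<sigma>_def)
      then show "\<mu> k = (\<Sum>i\<in>\<sigma>. t' i * y i k)" using t'(3) tsum by simp
    qed
  qed
  then show False using nm by simp
qed

theorem corollary4:
  fixes d :: nat
  shows "\<exists>n \<Delta>. simplicial_complex n \<Delta> \<and> ctd n \<Delta> \<ge> d"
proof -
  define M where "M = 2*d+2"
  define \<Delta> where "\<Delta> = {\<sigma>. \<sigma> \<subseteq> {0..<2*M} \<and> card (fp M \<sigma>) \<le> d}"
  have sc: "simplicial_complex (2*M) \<Delta>" unfolding simplicial_complex_def
  proof (intro conjI ballI allI impI)
    show "\<Delta> \<subseteq> Pow {0..<2 * M}" unfolding \<Delta>_def by auto
    fix \<sigma> \<tau> assume s: "\<sigma> \<in> \<Delta>" and ts: "\<tau> \<subseteq> \<sigma>"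
    have "fp M \<tau> \<subseteq> fp M \<sigma>" using ts unfolding fp_def by auto
    moreover have "finite (fp M \<sigma>)" unfolding fp_def by simp
    ultimately have "card (fp M \<tau>) \<le> card (fp M \<sigma>)" by (rule card_mono[rotated])
    then show "\<tau> \<in> \<Delta>" using s ts unfolding \<Delta>_def by auto
  qed
  have "{} \<in> \<Delta>" unfolding \<Delta>_def fp_def by simp
  then obtain D where D: "realizable_in (2*M) \<Delta> D" using realize[OF sc] by blast
  have "d \<le> ctd (2*M) \<Delta>"
  proof (rule ccontr)
    assume "\<not> d \<le> ctd (2*M) \<Delta>"
    then have lt: "ctd (2*M) \<Delta> \<le> d" by simp
    have "realizable_in (2*M) \<Delta> (ctd (2*M) \<Delta>)" unfolding ctd_def using D by (rule LeastI)
    then show False using lower[of d "ctd (2*M) \<Delta>"] lt unfolding M_def \<Delta>_def by blast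
  qed
  then show ?thesis using sc by blast
qed

end
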